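(* Let $A_1,\dots,A_k$ be $2\times2$ real matrices with all entries strictly positive and norm $<1$, $d_i\in\mathbb R^2$, $T_i(x)=A_ix+d_i$, and assume $T_i(D)\subset D$ for all $i$, where $D$ is the closed unit disc. Then for every $\theta\in\mathbb{PR}^1$, every $n\ge0$ and every $a_1,\dots,a_{n+1}\in\{1,\dots,k\}$, \[ |a_1\cdots a_{n+1}|_\theta-|a_1\cdots a_n|_\theta=|a_{n+1}|_{\phi_{a_n\cdots a_1}(\theta)}. \]
   Context: $\mathbb{PR}^1$ is the space of lines through the origin in $\mathbb R^2$ (directions). For $\theta\in\mathbb{PR}^1$, $\pi_\theta$ is orthogonal projection onto the line through the origin perpendicular to $\theta$ (so fibres are lines in direction $\theta$); $\pi_\theta(D)$ is a segment of length 2. For a word $w=a_1\cdots a_n$, $T_w=T_{a_1}\circ\cdots\circ T_{a_n}$ and $D_w=T_w(D)$ (with $D_\emptyset=D$). The length function is $|w|_\theta=-\log_2\big(|\pi_\theta(D_w)|/2\big)$, where $|\cdot|$ denotes length of an interval. For each $i$, $\phi_i:\mathbb{PR}^1\to\mathbb{PR}^1$ sends a line $\ell$ to $A_i^{-1}(\ell)$, and $\phi_{a_n\cdots a_1}=\phi_{a_n}\circ\cdots\circ\phi_{a_1}$ (the identity for $n=0$). *)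

theory Defs
  imports "HOL-Analysis.Analysis"
begin

text \<open>Points of the plane are vectors of type real^2; matrices are real^2^2.
  An element of PR^1 is a line through the origin, represented as a set.\<close>

definition proj_line :: "(real^2) set \<Rightarrow> bool" where
  "proj_line L \<longleftrightarrow> (\<exists>v::real^2. v \<noteq> 0 \<and> L = span {v})"

definition perp_proj :: "(real^2) set \<Rightarrow> real^2 \<Rightarrow> real^2" where
  "perp_proj \<theta> x = (let v = (SOME v. v \<noteq> 0 \<and> \<theta> = span {v})
                      in x - ((x \<bullet> v) / (v \<bullet> v)) *\<^sub>R v)"

definition unit_disc :: "(real^2) set" where
  "unit_disc = cball 0 1"

text \<open>T_w = T_{a_1} o ... o T_{a_n} for the word w = [a_1,...,a_n].\<close>
definition Tmap :: "(nat \<Rightarrow> real^2^2) \<Rightarrow> (nat \<Rightarrow> real^2) \<Rightarrow> nat \<Rightarrow> real^2 \<Rightarrow> real^2" where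
  "Tmap A d i x = A i *v x + d i"

definition Tword :: "(nat \<Rightarrow> real^2^2) \<Rightarrow> (nat \<Rightarrow> real^2) \<Rightarrow> nat list \<Rightarrow> real^2 \<Rightarrow> real^2" where
  "Tword A d w = foldr (\<lambda>a f. Tmap A d a \<circ> f) w id"

definition Dword :: "(nat \<Rightarrow> real^2^2) \<Rightarrow> (nat \<Rightarrow> real^2) \<Rightarrow> nat list \<Rightarrow> (real^2) set" where
  "Dword A d w = Tword A d w ` unit_disc"

text \<open>|w|_theta = - log_2 (|pi_theta(D_w)| / 2); the length of the projected segment is its diameter.\<close>
definition wlen :: "(nat \<Rightarrow> real^2^2) \<Rightarrow> (nat \<Rightarrow> real^2) \<Rightarrow> (real^2) set \<Rightarrow> nat list \<Rightarrow> real" where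
  "wlen A d \<theta> w = - log 2 (diameter (perp_proj \<theta> ` Dword A d w) / 2)"

definition phi :: "(nat \<Rightarrow> real^2^2) \<Rightarrow> nat \<Rightarrow> (real^2) set \<Rightarrow> (real^2) set" where
  "phi A i L = {x. A i *v x \<in> L}"

text \<open>For w = [a_1,...,a_n], phiword A w = phi_{a_n} o ... o phi_{a_1}.\<close>
definition phiword :: "(nat \<Rightarrow> real^2^2) \<Rightarrow> nat list \<Rightarrow> (real^2) set \<Rightarrow> (real^2) set" where
  "phiword A w \<theta> = fold (phi A) w \<theta>"

end

theory Submission
  imports Defs
begin

definition perp :: "real^2 \<Rightarrow> real^2" where
  "perp v = (\<chi> i. if i = 1 then - (v$2) else v$1)"

lemma perp_comp [simp]: "perp v $ 1 = - (v$2)" "perp v $ 2 = v$1"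
  by (simp_all add: perp_def)

lemma inner2: "(x::real^2) \<bullet> y = x$1*y$1 + x$2*y$2"
  by (simp add: inner_vec_def sum_2)

lemma norm2: "norm (x::real^2) = sqrt (x$1^2 + x$2^2)"
  by (simp add: norm_eq_sqrt_inner inner2 power2_eq_square)

lemma perp_scale: "perp (t *\<^sub>R v) = t *\<^sub>R perp v"
  by (simp add: vec_eq_iff forall_2)

lemma norm_perp: "norm (perp v) = norm v"
  by (simp add: norm2 add.commute)

lemma proj_eq:
  assumes "v \<noteq> 0"
  shows "x - ((x \<bullet> v)/(v \<bullet> v)) *\<^sub>R v = ((x \<bullet> perp v)/(perp v \<bullet> perp v)) *\<^sub>R perp v"
proof -
  have vv: "v$1^2 + v$2^2 \<noteq> 0"
    using assms by (metis norm2 norm_eq_zero real_sqrt_zero)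
  show ?thesis
    using vv by (simp add: vec_eq_iff forall_2 inner2 field_simps power2_eq_square)
qed

lemma diam:
  fixes w q :: "real^2"
  shows "diameter ((\<lambda>x. (x \<bullet> w + e) *\<^sub>R q) ` cball 0 1) = 2 * norm w * norm q"
proof (rule antisym)
  let ?S = "(\<lambda>x. (x \<bullet> w + e) *\<^sub>R q) ` cball 0 1"
  show "diameter ?S \<le> 2 * norm w * norm q"
  proof (rule diameter_le)
    show "?S \<noteq> {} \<or> 0 \<le> 2 * norm w * norm q" by simp
    fix a b assume "a \<in> ?S" "b \<in> ?S"
    then obtain x y where x: "norm x \<le> 1" "a = (x \<bullet> w + e) *\<^sub>R q" and y: "norm y \<le> 1" "b = (y \<bullet> w + e) *\<^sub>R q"
      by auto
    have "norm (a - b) = \<bar>(x - y) \<bullet> w\<bar> * norm q"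
      using x y by (simp add: algebra_simps flip: scaleR_diff_left)
    also have "\<dots> \<le> (norm (x - y) * norm w) * norm q"
      by (intro mult_right_mono Cauchy_Schwarz_ineq2) auto
    also have "norm (x - y) \<le> 2"
      using x y norm_triangle_ineq4[of x y] by linarith
    hence "(norm (x - y) * norm w) * norm q \<le> 2 * norm w * norm q"
      by (intro mult_right_mono) auto
    finally show "norm (a - b) \<le> 2 * norm w * norm q" by simp
  qed
next
  let ?f = "\<lambda>x. (x \<bullet> w + e) *\<^sub>R q"
  let ?S = "?f ` cball 0 1"
  have bS: "bounded ?S"
    by (intro compact_imp_bounded compact_continuous_image) (auto intro!: continuous_intros)
  show "2 * norm w * norm q \<le> diameter ?S"
  proof (cases "w = 0")
    case True thus ?thesis using diameter_ge_0[OF bS] by simp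
  next
    case False
    define x where "x = (1/norm w) *\<^sub>R w"
    have nx: "norm x = 1" using False by (simp add: x_def)
    have xw: "x \<bullet> w = norm w" using False by (simp add: x_def dot_square_norm power2_eq_square)
    have "?f x \<in> ?S" "?f (-x) \<in> ?S" using nx by (auto intro!: imageI simp del: inner_minus_left)
    hence "norm (?f x - ?f (-x)) \<le> diameter ?S"
      using diameter_bounded_bound[OF bS] by (simp add: dist_norm)
    moreover have "?f x - ?f (-x) = (2 * norm w) *\<^sub>R q"
      using xw by (simp flip: scaleR_diff_left)
    ultimately show ?thesis by simp
  qed
qed


lemma span_sing: "span {x::real^2} = range (\<lambda>k. k *\<^sub>R x)"
  using span_singleton by auto

definition prodm :: "(nat \<Rightarrow> real^2^2) \<Rightarrow> nat list \<Rightarrow> real^2^2" where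
  "prodm A w = foldr (\<lambda>a M. A a ** M) w (mat 1)"

lemma foldr_mat: "foldr (\<lambda>a M. A a ** M) w B = foldr (\<lambda>a M. A a ** M) w (mat 1) ** (B :: real^2^2)"
  by (induction w) (auto simp: matrix_mul_assoc)

lemma prodm_snoc: "prodm A (w @ [a]) = prodm A w ** A a"
  unfolding prodm_def by (simp, subst foldr_mat, simp)

lemma prodm_single: "prodm A [a] = A a"
  by (simp add: prodm_def)

lemma Tword_affine: "\<exists>c. Tword A d w = (\<lambda>x. prodm A w *v x + c)"
proof (induction w)
  case Nil thus ?case by (auto simp: Tword_def prodm_def fun_eq_iff intro: exI[of _ 0])
next
  case (Cons a w)
  then obtain c where c: "Tword A d w = (\<lambda>x. prodm A w *v x + c)" by blast
  have "Tword A d (a # w) = Tmap A d a \<circ> Tword A d w" by (simp add: Tword_def)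
  also have "\<dots> = (\<lambda>x. prodm A (a # w) *v x + (A a *v c + d a))"
    by (simp add: c Tmap_def fun_eq_iff prodm_def matrix_vector_right_distrib matrix_vector_mul_assoc)
  finally show ?case by blast
qed

lemma diam_affine:
  fixes M :: "real^2^2"
  assumes "v \<noteq> 0"
  shows "diameter ((\<lambda>x. x - ((x \<bullet> v)/(v \<bullet> v)) *\<^sub>R v) ` ((\<lambda>x. M *v x + c) ` cball 0 1))
    = 2 * (norm (perp v v* M) / norm (perp v))"
proof -
  let ?u = "perp v"
  have u0: "?u \<noteq> 0" using assms norm_perp[of v] by (metis norm_eq_zero)
  have uu: "?u \<bullet> ?u = norm ?u ^ 2" by (simp add: power2_norm_eq_inner)
  have eq: "(\<lambda>x. x - ((x \<bullet> v)/(v \<bullet> v)) *\<^sub>R v) \<circ> (\<lambda>x. M *v x + c)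
     = (\<lambda>x. (x \<bullet> (?u v* M) + c \<bullet> ?u) *\<^sub>R ((1/(?u \<bullet> ?u)) *\<^sub>R ?u))"
  proof
    fix x
    have "(M *v x) \<bullet> ?u = x \<bullet> (?u v* M)"
      by (metis dot_lmul_matrix inner_commute)
    thus "((\<lambda>x. x - ((x \<bullet> v)/(v \<bullet> v)) *\<^sub>R v) \<circ> (\<lambda>x. M *v x + c)) x
       = (x \<bullet> (?u v* M) + c \<bullet> ?u) *\<^sub>R ((1/(?u \<bullet> ?u)) *\<^sub>R ?u)"
      using proj_eq[OF assms, of "M *v x + c"] by (simp add: inner_add_left divide_inverse)
  qed
  have "diameter ((\<lambda>x. x - ((x \<bullet> v)/(v \<bullet> v)) *\<^sub>R v) ` ((\<lambda>x. M *v x + c) ` cball 0 1))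
     = diameter ((\<lambda>x. (x \<bullet> (?u v* M) + c \<bullet> ?u) *\<^sub>R ((1/(?u \<bullet> ?u)) *\<^sub>R ?u)) ` cball 0 1)"
    by (simp only: image_comp eq)
  also have "\<dots> = 2 * norm (?u v* M) * norm ((1/(?u \<bullet> ?u)) *\<^sub>R ?u)" by (simp only: diam)
  also have "norm ((1/(?u \<bullet> ?u)) *\<^sub>R ?u) = 1 / norm ?u"
    using u0 uu by (simp add: power2_eq_square)
  finally show ?thesis by simp
qed

lemma vm_scale: "(t *\<^sub>R x) v* (M::real^'n^'m) = t *\<^sub>R (x v* M)"
  by (simp add: vec_eq_iff vector_matrix_mult_def sum_distrib_left mult.assoc)

lemma ratio_scale:
  assumes "t \<noteq> 0"
  shows "norm (perp (t *\<^sub>R v) v* M) / norm (perp (t *\<^sub>R v)) = norm (perp v v* M) / norm (perp v)"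
proof -
  have "norm (perp (t *\<^sub>R v) v* M) = \<bar>t\<bar> * norm (perp v v* M)"
    by (simp only: perp_scale vm_scale norm_scaleR)
  moreover have "norm (perp (t *\<^sub>R v)) = \<bar>t\<bar> * norm (perp v)"
    by (simp only: perp_scale norm_scaleR)
  ultimately show ?thesis using assms by simp
qed

lemma wlen_formula:
  assumes v: "v \<noteq> 0" and th: "\<theta> = span {v}"
  shows "wlen A d \<theta> w = - log 2 (norm (perp v v* prodm A w) / norm (perp v))"
proof -
  define v0 where "v0 = (SOME v. v \<noteq> 0 \<and> \<theta> = span {v})"
  have v0: "v0 \<noteq> 0 \<and> \<theta> = span {v0}"
    unfolding v0_def by (rule someI[of "\<lambda>v. v \<noteq> 0 \<and> \<theta> = span {v}" v]) (use v th in blast)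
  have "v0 \<in> span {v}" using v0 th span_base[of v0 "{v0}"] by blast
  then obtain t where t: "v0 = t *\<^sub>R v" unfolding span_sing by blast
  have t0: "t \<noteq> 0" using v0 t by auto
  obtain c where c: "Tword A d w = (\<lambda>x. prodm A w *v x + c)" using Tword_affine by blast
  have pp: "perp_proj \<theta> = (\<lambda>x. x - ((x \<bullet> v0)/(v0 \<bullet> v0)) *\<^sub>R v0)"
    unfolding perp_proj_def v0_def[symmetric] Let_def ..
  have "diameter (perp_proj \<theta> ` Dword A d w) = 2 * (norm (perp v0 v* prodm A w) / norm (perp v0))"
    unfolding pp Dword_def c unit_disc_def using v0 by (intro diam_affine) blast
  also have "norm (perp v0 v* prodm A w) / norm (perp v0) = norm (perp v v* prodm A w) / norm (perp v)"
    unfolding t by (rule ratio_scale[OF t0])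
  finally show ?thesis by (simp add: wlen_def)
qed


lemma phiword_eq: "phiword A w \<theta> = {x. prodm A w *v x \<in> \<theta>}"
proof (induction w arbitrary: \<theta>)
  case Nil thus ?case by (simp add: phiword_def prodm_def)
next
  case (Cons a w)
  have "phiword A (a # w) \<theta> = phiword A w (phi A a \<theta>)" by (simp add: phiword_def)
  also have "\<dots> = {x. prodm A (a # w) *v x \<in> \<theta>}"
    by (simp add: Cons phi_def prodm_def matrix_vector_mul_assoc)
  finally show ?case .
qed

lemma det_ident: "perp ((M::real^2^2) *v y) v* M = det M *\<^sub>R perp y"
  by (simp add: vec_eq_iff forall_2 vector_matrix_mult_def matrix_vector_mult_def sum_2 det_2 algebra_simps)

lemma inv_zero:
  fixes N :: "real^'n^'n"
  assumes "invertible N" "N *v x = 0" shows "x = 0"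
proof -
  obtain B where "B ** N = mat 1" using assms(1) invertible_left_inverse by blast
  hence "x = B *v (N *v x)" by (simp add: matrix_vector_mul_assoc)
  thus ?thesis using assms(2) by simp
qed

lemma inv_zero_left:
  fixes N :: "real^'n^'n"
  assumes "invertible N" "x \<noteq> 0" shows "x v* N \<noteq> 0"
  using inv_zero[OF transpose_invertible[OF assms(1)], of x] assms(2) by auto

lemma prodm_inv:
  assumes "\<And>i. i \<in> set w \<Longrightarrow> invertible (A i)"
  shows "invertible (prodm A w)"
  using assms
proof (induction w)
  case Nil show ?case unfolding prodm_def invertible_def by (auto intro: exI[of _ "mat 1"])
next
  case (Cons a w) thus ?case by (simp add: prodm_def invertible_mult)
qed

lemma perp_nz: "v \<noteq> 0 \<Longrightarrow> perp v \<noteq> 0"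
  by (metis norm_eq_zero norm_perp)

theorem lemma4p2:
  fixes k :: nat and A :: "nat \<Rightarrow> real^2^2" and d :: "nat \<Rightarrow> real^2"
  assumes pos: "\<And>i r s. i \<in> {1..k} \<Longrightarrow> A i $ r $ s > 0"
    and nrm: "\<And>i. i \<in> {1..k} \<Longrightarrow> onorm (\<lambda>x. A i *v x) < 1"
    and inv: "\<And>i. i \<in> {1..k} \<Longrightarrow> invertible (A i)"
    and inD: "\<And>i. i \<in> {1..k} \<Longrightarrow> Tmap A d i ` unit_disc \<subseteq> unit_disc"
    and th: "proj_line \<theta>"
    and w: "set w \<subseteq> {1..k}"
    and a: "a \<in> {1..k}"
  shows "wlen A d \<theta> (w @ [a]) - wlen A d \<theta> w = wlen A d (phiword A w \<theta>) [a]"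
proof -
  obtain v where v: "v \<noteq> 0" "\<theta> = span {v}" using th unfolding proj_line_def by blast
  define M where "M = prodm A w"
  define p where "p = perp v"
  define q where "q = p v* M"
  define r where "r = q v* A a"
  have Minv: "invertible M" unfolding M_def using w inv by (intro prodm_inv) auto
  have Ainv: "invertible (A a)" using inv a by blast
  have p0: "p \<noteq> 0" unfolding p_def using v perp_nz by blast
  have q0: "q \<noteq> 0" unfolding q_def using inv_zero_left[OF Minv p0] .
  have r0: "r \<noteq> 0" unfolding r_def using inv_zero_left[OF Ainv q0] .
  have L1: "wlen A d \<theta> (w @ [a]) = - log 2 (norm r / norm p)"
    using wlen_formula[OF v, of A d "w @ [a]"]
    by (simp add: prodm_snoc r_def q_def p_def M_def vector_matrix_mul_assoc)
  have L2: "wlen A d \<theta> w = - log 2 (norm q / norm p)"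
    using wlen_formula[OF v, of A d w] by (simp add: q_def p_def M_def)
  have LHS: "wlen A d \<theta> (w @ [a]) - wlen A d \<theta> w = - log 2 (norm r / norm q)"
    unfolding L1 L2 using p0 q0 r0 by (simp add: log_divide)
  obtain B where B: "M ** B = mat 1" using Minv invertible_right_inverse by blast
  define v' where "v' = B *v v"
  have Mv': "M *v v' = v" unfolding v'_def using B by (simp add: matrix_vector_mul_assoc)
  have v'0: "v' \<noteq> 0" using Mv' v(1) by auto
  have inj: "M *v x = M *v y \<Longrightarrow> x = y" for x y
    using inv_zero[OF Minv, of "x - y"] by (simp add: matrix_vector_mult_diff_distrib)
  have sp: "phiword A w \<theta> = span {v'}"
  proof -
    have "phiword A w \<theta> = {x. M *v x \<in> span {v}}" by (simp add: phiword_eq M_def v(2))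
    also have "\<dots> = span {v'}"
    proof (rule set_eqI)
      fix x
      show "x \<in> {x. M *v x \<in> span {v}} \<longleftrightarrow> x \<in> span {v'}"
      proof
        assume "x \<in> {x. M *v x \<in> span {v}}"
        then obtain t where "M *v x = t *\<^sub>R v" unfolding span_sing by auto
        hence "M *v x = M *v (t *\<^sub>R v')" by (simp add: Mv' matrix_vector_mult_scaleR)
        hence "x = t *\<^sub>R v'" by (rule inj)
        thus "x \<in> span {v'}" unfolding span_sing by auto
      next
        assume "x \<in> span {v'}"
        then obtain t where "x = t *\<^sub>R v'" unfolding span_sing by auto
        thus "x \<in> {x. M *v x \<in> span {v}}" by (simp add: Mv' matrix_vector_mult_scaleR span_sing) blast
      qed
    qed
    finally show ?thesis .
  qed
  have dM: "det M \<noteq> 0" using Minv invertible_det_nz by blast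
  have pv': "perp v' = (1 / det M) *\<^sub>R q"
    using det_ident[of M v'] dM unfolding q_def p_def Mv' by simp
  have R: "wlen A d (phiword A w \<theta>) [a] = - log 2 (norm (perp v' v* A a) / norm (perp v'))"
    using wlen_formula[OF v'0 sp, of A d "[a]"] by (simp add: prodm_single)
  also have "norm (perp v' v* A a) / norm (perp v') = norm r / norm q"
    unfolding pv' r_def using dM by (simp only: vm_scale norm_scaleR) simp
  finally show ?thesis using LHS by simp
qed

end
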